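(* Let $e_1,\dots,e_N\in C(\mathbb C/\Gamma;\mathbb C^2)$ be orthonormal in $L^2(\mathbb C/\Gamma;\mathbb C^2)$, and for $k=1,2$ let $\vec e_k(x)=(e_1^k(x),\dots,e_N^k(x))^T\in\mathbb C^N$. For $j\in\{1,2\}^N$ and $a=(a_1,\dots,a_N)\in(\mathbb C/\Gamma)^N$ let $E(j,a)$ be the $N\times N$ matrix with columns $\vec e_{j_1}(a_1),\dots,\vec e_{j_N}(a_N)$. Then there exist $j\in\{1,2\}^N$ and $a\in(\mathbb C/\Gamma)^N$ with $$|\det E(j,a)|\ \ge\ \frac{\sqrt{N!}}{2^{N/2}|\mathbb C/\Gamma|^{N/2}}.$$
   Context: $\Gamma=4\pi(i\omega\mathbb Z\oplus i\omega^2\mathbb Z)\subset\mathbb C$ with $\omega=e^{2\pi i/3}$; $\mathbb C/\Gamma$ is the flat torus with Lebesgue measure and area $|\mathbb C/\Gamma|$. Write $e_j=(e_j^1,e_j^2)$; the $L^2$ inner product is $(\psi|\phi)=\int_{\mathbb C/\Gamma}(\psi^1\bar\phi^1+\psi^2\bar\phi^2)\,dx$. *)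

theory Defs
  imports "HOL-Analysis.Analysis" "Jordan_Normal_Form.Determinant"
begin

definition omega :: complex where "omega = cis (2 * pi / 3)"

text \<open>Generators of the lattice Gamma = 4 pi (i omega Z + i omega^2 Z).\<close>
definition gv1 :: complex where "gv1 = 4 * pi * \<i> * omega"
definition gv2 :: complex where "gv2 = 4 * pi * \<i> * omega ^ 2"

text \<open>Closed fundamental parallelogram of Gamma (boundary is a null set).\<close>
definition fund_dom :: "complex set" where
  "fund_dom = {complex_of_real s * gv1 + complex_of_real t * gv2 | s t. s \<in> {0..1} \<and> t \<in> {0..1}}"

definition torus_area :: real where "torus_area = measure lborel fund_dom"

text \<open>Gamma-periodic functions on C = functions on the torus C/Gamma.\<close>
definition gamma_periodic :: "(complex \<Rightarrow> 'a) \<Rightarrow> bool" where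
  "gamma_periodic f \<longleftrightarrow> (\<forall>z. f (z + gv1) = f z \<and> f (z + gv2) = f z)"

definition L2ip :: "(complex \<Rightarrow> complex \<times> complex) \<Rightarrow> (complex \<Rightarrow> complex \<times> complex) \<Rightarrow> complex" where
  "L2ip \<psi> \<phi> = integral fund_dom (\<lambda>x. fst (\<psi> x) * cnj (fst (\<phi> x)) + snd (\<psi> x) * cnj (snd (\<phi> x)))"

definition comp2 :: "nat \<Rightarrow> complex \<times> complex \<Rightarrow> complex" where
  "comp2 k v = (if k = 1 then fst v else snd v)"

definition Emat :: "nat \<Rightarrow> (nat \<Rightarrow> complex \<Rightarrow> complex \<times> complex) \<Rightarrow> (nat \<Rightarrow> nat) \<Rightarrow> (nat \<Rightarrow> complex) \<Rightarrow> complex mat" where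
  "Emat N e j a = Matrix.mat N N (\<lambda>(r, c). comp2 (j c) (e r (a c)))"

end

theory Submission
  imports Defs
begin

lemma int_compact:
  fixes f :: "complex \<Rightarrow> 'b::euclidean_space"
  assumes "compact S" "continuous_on S f"
  shows "f integrable_on S"
proof -
  have I: "integrable lborel (\<lambda>x. indicator S x *\<^sub>R f x)"
    by (rule borel_integrable_compact[OF assms])
  have "set_integrable lebesgue S f"
    unfolding set_integrable_def
    using integrable_completion[OF borel_measurable_integrable[OF I]] I by simp
  then show ?thesis by (rule set_lebesgue_integral_eq_integral)
qed

lemma fund_dom_image:
  "fund_dom = (\<lambda>p. complex_of_real (fst p) * gv1 + complex_of_real (snd p) * gv2) ` ({0..1} \<times> {0..1})"
  unfolding fund_dom_def by (auto simp: image_def; fastforce)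

lemma compact_fund_dom: "compact fund_dom"
  unfolding fund_dom_image
  by (intro compact_continuous_image compact_Times compact_Icc continuous_intros)

lemma fund_dom_ne: "fund_dom \<noteq> {}"
  unfolding fund_dom_image by auto

lemma torus_area_lebesgue: "measure lebesgue fund_dom = torus_area"
  unfolding torus_area_def
  by (rule measure_completion) (simp add: borel_closed compact_imp_closed compact_fund_dom)

lemma integral_const_fund: "integral fund_dom (\<lambda>x. c::real) = c * torus_area"
proof -
  have "integral fund_dom (\<lambda>x. c * 1) = c * integral fund_dom (\<lambda>x. 1::real)"
    by (rule integral_mult_right)
  also have "integral fund_dom (\<lambda>x. 1::real) = torus_area"
    using lmeasure_integral[OF lmeasurable_compact[OF compact_fund_dom]] torus_area_lebesgue by simp
  finally show ?thesis by simp
qed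

lemma comp2_cont: "continuous_on UNIV g \<Longrightarrow> continuous_on UNIV (\<lambda>x. comp2 k (g x))"
  unfolding comp2_def by (cases "k = 1") (auto intro: continuous_intros)

lemma cnj_det: "Determinant.det (map_mat cnj A) = cnj (Determinant.det A)"
  unfolding Determinant.det_def by (simp add: cnj_sum cnj_prod)

lemma fact_prod: "(\<Prod>i<N. real (N - i)) = fact N"
  by (simp add: fact_prod_rev lessThan_atLeast0 of_nat_prod)
lemma bordered_det:
  fixes f :: "nat \<Rightarrow> nat \<Rightarrow> complex" and n :: nat
  defines "G \<equiv> Matrix.mat n n (\<lambda>(i,j). f i j)"
  assumes nz: "Determinant.det G \<noteq> 0"
  shows "Determinant.det (Matrix.mat (Suc n) (Suc n) (\<lambda>(i,j). f i j)) =
     f n n * Determinant.det G - (\<Sum>i<n. \<Sum>j<n. f n i * adj_mat G $$ (i,j) * f j n)"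
proof -
  define B where "B = Matrix.mat n 1 (\<lambda>(i,_). f i n)"
  define C where "C = Matrix.mat 1 n (\<lambda>(_,j). f n j)"
  define D where "D = Matrix.mat 1 1 (\<lambda>_. f n n)"
  have G: "G \<in> carrier_mat n n" and B: "B \<in> carrier_mat n 1" and C: "C \<in> carrier_mat 1 n"
    and D: "D \<in> carrier_mat 1 1" by (auto simp: G_def B_def C_def D_def less_Suc_eq)
  have aG: "adj_mat G \<in> carrier_mat n n" using adj_mat[OF G] by auto
  define X where "X = adj_mat G * B"
  have X: "X \<in> carrier_mat n 1" using aG B by (auto simp: X_def)
  define E where "E = Determinant.det G \<cdot>\<^sub>m 1\<^sub>m 1"
  have E: "E \<in> carrier_mat 1 1" by (auto simp: E_def)
  have big: "Matrix.mat (Suc n) (Suc n) (\<lambda>(i,j). f i j) = four_block_mat G B C D"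
    by (rule eq_matI) (auto simp: G_def B_def C_def D_def less_Suc_eq)
  define N where "N = four_block_mat (1\<^sub>m n) (-X) (0\<^sub>m 1 n) E"
  have Ncar: "N \<in> carrier_mat (n+1) (n+1)" using E by (auto simp: N_def)
  have detN: "Determinant.det N = Determinant.det G"
    unfolding N_def
    by (subst det_four_block_mat_lower_left_zero[of _ n _ 1], insert X E, auto simp: E_def)
  have prod: "four_block_mat G B C D * N =
     four_block_mat (G * 1\<^sub>m n + B * 0\<^sub>m 1 n) (G * (-X) + B * E) (C * 1\<^sub>m n + D * 0\<^sub>m 1 n) (C * (-X) + D * E)"
    unfolding N_def by (rule mult_four_block_mat[OF G B C D]) (insert X E, auto)
  have GX: "G * X = Determinant.det G \<cdot>\<^sub>m B"
  proof -
    have "G * X = (G * adj_mat G) * B" unfolding X_def using G aG B by (simp add: assoc_mult_mat)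
    also have "\<dots> = (Determinant.det G \<cdot>\<^sub>m 1\<^sub>m n) * B" using adj_mat[OF G] by simp
    also have "\<dots> = Determinant.det G \<cdot>\<^sub>m B" using B by (simp add: mult_smult_assoc_mat[of _ n n])
    finally show ?thesis .
  qed
  have z: "G * (-X) + B * E = 0\<^sub>m n 1"
  proof -
    have "G * (-X) = - (G * X)" using G X by auto
    moreover have "B * E = Determinant.det G \<cdot>\<^sub>m B" using B by (auto simp: E_def)
    ultimately show ?thesis using GX B by auto
  qed
  have car: "four_block_mat G B C D \<in> carrier_mat (n+1) (n+1)" using G D by auto
  define L where "L = C * (-X) + D * E"
  have L: "L \<in> carrier_mat 1 1" using C X D E by (auto simp: L_def)
  have "Determinant.det (four_block_mat G B C D) * Determinant.det G =
     Determinant.det (four_block_mat G (0\<^sub>m n 1) C L)"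
    using det_mult[OF car Ncar] prod z detN G B C D by (simp add: L_def)
  also have "\<dots> = Determinant.det G * Determinant.det L"
    by (rule det_four_block_mat_upper_right_zero[OF G refl C L])
  finally have "Determinant.det (four_block_mat G B C D) = Determinant.det L"
    using nz by simp
  also have "Determinant.det L = L $$ (0,0)" by (rule det_single[OF L])
  also have "L $$ (0,0) = f n n * Determinant.det G - (\<Sum>i<n. \<Sum>j<n. f n i * adj_mat G $$ (i,j) * f j n)"
  proof -
    have Xi: "X $$ (i,0) = (\<Sum>j<n. adj_mat G $$ (i,j) * f j n)" if "i < n" for i
      using that aG B unfolding X_def
      by (auto simp: scalar_prod_def B_def lessThan_atLeast0 intro!: sum.cong)
    have "(C * (-X)) $$ (0,0) = - (\<Sum>i<n. f n i * X $$ (i,0))"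
      using C X by (simp add: scalar_prod_def C_def lessThan_atLeast0 sum_negf)
    also have "\<dots> = - (\<Sum>i<n. \<Sum>j<n. f n i * adj_mat G $$ (i,j) * f j n)"
      by (simp add: Xi sum_distrib_left mult.assoc)
    finally have 1: "(C * (-X)) $$ (0,0) = - (\<Sum>i<n. \<Sum>j<n. f n i * adj_mat G $$ (i,j) * f j n)" .
    have 2: "(D * E) $$ (0,0) = f n n * Determinant.det G"
      using D E by (simp add: scalar_prod_def D_def E_def)
    show ?thesis unfolding L_def using C X D E 1 2 by simp
  qed
  finally show ?thesis using big by simp
qed
lemma sum_alg:
  fixes W :: "nat \<Rightarrow> complex" and V :: "nat \<Rightarrow> nat \<Rightarrow> complex" and Ad :: "nat \<Rightarrow> nat \<Rightarrow> complex"
  shows "(\<Sum>i<n. \<Sum>i'<n. (\<Sum>r<M. cnj (W r) * V r i) * Ad i i' * (\<Sum>s<M. cnj (V s i') * W s)) =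
    (\<Sum>r<M. \<Sum>s<M. cnj (W r) * W s * (\<Sum>i<n. \<Sum>i'<n. V r i * Ad i i' * cnj (V s i')))"
proof -
  have "(\<Sum>i<n. \<Sum>i'<n. (\<Sum>r<M. cnj (W r) * V r i) * Ad i i' * (\<Sum>s<M. cnj (V s i') * W s)) =
     (\<Sum>i<n. \<Sum>i'<n. \<Sum>r<M. \<Sum>s<M. cnj (W r) * W s * (V r i * Ad i i' * cnj (V s i')))"
    by (simp add: sum_distrib_left sum_distrib_right mult_ac)
  also have "\<dots> = (\<Sum>i<n. \<Sum>r<M. \<Sum>i'<n. \<Sum>s<M. cnj (W r) * W s * (V r i * Ad i i' * cnj (V s i')))"
    by (simp add: sum.swap[of _ "{..<n}" "{..<M}"])
  also have "\<dots> = (\<Sum>r<M. \<Sum>i<n. \<Sum>s<M. \<Sum>i'<n. cnj (W r) * W s * (V r i * Ad i i' * cnj (V s i')))"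
    by (subst sum.swap) (simp add: sum.swap[of _ "{..<n}" "{..<M}"])
  also have "\<dots> = (\<Sum>r<M. \<Sum>s<M. \<Sum>i<n. \<Sum>i'<n. cnj (W r) * W s * (V r i * Ad i i' * cnj (V s i')))"
    by (simp add: sum.swap[of _ "{..<n}" "{..<M}"])
  also have "\<dots> = (\<Sum>r<M. \<Sum>s<M. cnj (W r) * W s * (\<Sum>i<n. \<Sum>i'<n. V r i * Ad i i' * cnj (V s i')))"
    by (simp add: sum_distrib_left)
  finally show ?thesis .
qed

lemma trace_alg:
  fixes V :: "nat \<Rightarrow> nat \<Rightarrow> complex" and Ad :: "nat \<Rightarrow> nat \<Rightarrow> complex"
  shows "(\<Sum>r<M. \<Sum>i<n. \<Sum>i'<n. V r i * Ad i i' * cnj (V r i')) =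
    (\<Sum>i<n. \<Sum>i'<n. Ad i i' * (\<Sum>r<M. cnj (V r i') * V r i))"
proof -
  have "(\<Sum>r<M. \<Sum>i<n. \<Sum>i'<n. V r i * Ad i i' * cnj (V r i')) =
     (\<Sum>i<n. \<Sum>r<M. \<Sum>i'<n. V r i * Ad i i' * cnj (V r i'))"
    by (rule sum.swap)
  also have "\<dots> = (\<Sum>i<n. \<Sum>i'<n. \<Sum>r<M. V r i * Ad i i' * cnj (V r i'))"
    by (simp add: sum.swap[of _ "{..<n}" "{..<M}"])
  also have "\<dots> = (\<Sum>i<n. \<Sum>i'<n. Ad i i' * (\<Sum>r<M. cnj (V r i') * V r i))"
    by (simp add: sum_distrib_left mult_ac)
  finally show ?thesis .
qed

lemma sum_delta_mult: "finite A \<Longrightarrow> (\<Sum>s\<in>A. f s * (if r = s then d else 0)) = (if r \<in> A then f r * d else (0::'a::comm_ring_1))"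
proof -
  assume "finite A"
  have "(\<Sum>s\<in>A. f s * (if r = s then d else 0)) = (\<Sum>s\<in>A. if r = s then f s * d else 0)"
    by (rule sum.cong) auto
  also have "\<dots> = (if r \<in> A then f r * d else 0)" using \<open>finite A\<close> by (simp add: sum.delta')
  finally show ?thesis .
qed

definition gram :: "nat \<Rightarrow> (nat \<Rightarrow> complex \<Rightarrow> complex \<times> complex) \<Rightarrow> nat \<Rightarrow> (nat \<Rightarrow> nat) \<Rightarrow> (nat \<Rightarrow> complex) \<Rightarrow> complex mat" where
  "gram M e n j a = Matrix.mat n n (\<lambda>(c,c'). \<Sum>r<M. cnj (comp2 (j c) (e r (a c))) * comp2 (j c') (e r (a c')))"


lemma gram_step:
  fixes e :: "nat \<Rightarrow> complex \<Rightarrow> complex \<times> complex" and M n :: nat and j :: "nat \<Rightarrow> nat" and a :: "nat \<Rightarrow> complex"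
  assumes cont: "\<And>i. i < M \<Longrightarrow> continuous_on UNIV (e i)"
    and orth: "\<And>i i'. i < M \<Longrightarrow> i' < M \<Longrightarrow> L2ip (e i) (e i') = (if i = i' then 1 else 0)"
    and nz: "Determinant.det (gram M e n j a) \<noteq> 0"
  shows "\<exists>k\<in>{1,2}. \<exists>x. (real M - real n) * Re (Determinant.det (gram M e n j a))
           \<le> 2 * torus_area * Re (Determinant.det (gram M e (Suc n) (j(n:=k)) (a(n:=x))))"
proof -
  define G where "G = gram M e n j a"
  define dG where "dG = Determinant.det G"
  define Ad where "Ad = (\<lambda>i i'. adj_mat G $$ (i,i'))"
  define v where "v = (\<lambda>r i. comp2 (j i) (e r (a i)))"
  define w where "w = (\<lambda>k x r. comp2 k (e r x))"
  define K where "K = (\<lambda>r s. (if r = s then dG else 0) - (\<Sum>i<n. \<Sum>i'<n. v r i * Ad i i' * cnj (v s i')))"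
  define \<Phi> where "\<Phi> = (\<lambda>k x. \<Sum>r<M. \<Sum>s<M. cnj (w k x r) * w k x s * K r s)"
  define D where "D = fund_dom"
  have detform: "Determinant.det (gram M e (Suc n) (j(n:=k)) (a(n:=x))) = \<Phi> k x" for k x
  proof -
    define f where "f = (\<lambda>c c'. \<Sum>r<M. cnj (comp2 ((j(n:=k)) c) (e r ((a(n:=x)) c))) * comp2 ((j(n:=k)) c') (e r ((a(n:=x)) c')))"
    have g1: "gram M e (Suc n) (j(n:=k)) (a(n:=x)) = Matrix.mat (Suc n) (Suc n) (\<lambda>(c,c'). f c c')"
      by (simp add: gram_def f_def)
    have Geq: "Matrix.mat n n (\<lambda>(c,c'). f c c') = G"
      by (rule eq_matI) (auto simp: G_def gram_def f_def)
    have "Determinant.det (gram M e (Suc n) (j(n:=k)) (a(n:=x))) =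
       f n n * dG - (\<Sum>i<n. \<Sum>i'<n. f n i * Ad i i' * f i' n)"
      using bordered_det[where f=f and n=n] nz unfolding g1 Geq dG_def Ad_def G_def by simp
    also have "\<dots> = (\<Sum>r<M. cnj (w k x r) * w k x r) * dG -
        (\<Sum>i<n. \<Sum>i'<n. (\<Sum>r<M. cnj (w k x r) * v r i) * Ad i i' * (\<Sum>s<M. cnj (v s i') * w k x s))"
      by (simp add: f_def w_def v_def)
    also have "\<dots> = \<Phi> k x"
    proof -
      have d: "(\<Sum>r<M. \<Sum>s<M. cnj (w k x r) * w k x s * (if r = s then dG else 0)) = (\<Sum>r<M. cnj (w k x r) * w k x r) * dG"
        by (simp add: sum_delta_mult sum_distrib_right)
      show ?thesis
        unfolding sum_alg \<Phi>_def K_def right_diff_distrib sum_subtractf d ..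
    qed
    finally show ?thesis .
  qed
  have cD: "compact D" using compact_fund_dom by (simp add: D_def)
  have wc: "continuous_on UNIV (\<lambda>x. w k x r)" if "r < M" for k r
    unfolding w_def by (rule comp2_cont[OF cont[OF that]])
  have wwc: "continuous_on UNIV (\<lambda>x. cnj (w k x r) * w k x s)" if "r < M" "s < M" for k r s
    using wc[OF that(1)] wc[OF that(2)] by (intro continuous_intros)
  have intg: "(\<lambda>x. cnj (w k x r) * w k x s) integrable_on D" if "r < M" "s < M" for k r s
    by (rule int_compact[OF cD continuous_on_subset[OF wwc[OF that]]]) simp
  have Phic: "continuous_on UNIV (\<Phi> k)" for k
    unfolding \<Phi>_def by (intro continuous_intros wwc) auto
  have Phii: "\<Phi> k integrable_on D" for k
    by (rule int_compact[OF cD continuous_on_subset[OF Phic]]) simp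
  have ortho: "integral D (\<lambda>x. cnj (w 1 x r) * w 1 x s) + integral D (\<lambda>x. cnj (w 2 x r) * w 2 x s)
      = (if r = s then 1 else 0)" if "r < M" "s < M" for r s
  proof -
    have "L2ip (e s) (e r) = (if r = s then 1 else 0)" using orth[OF that(2,1)] by auto
    moreover have "L2ip (e s) (e r) = integral D (\<lambda>x. cnj (w 1 x r) * w 1 x s + cnj (w 2 x r) * w 2 x s)"
      unfolding L2ip_def D_def w_def comp2_def by (simp add: mult.commute)
    moreover have "integral D (\<lambda>x. cnj (w 1 x r) * w 1 x s + cnj (w 2 x r) * w 2 x s) =
        integral D (\<lambda>x. cnj (w 1 x r) * w 1 x s) + integral D (\<lambda>x. cnj (w 2 x r) * w 2 x s)"
      by (rule integral_add[OF intg[OF that] intg[OF that]])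
    ultimately show ?thesis by simp
  qed
  have intPhi: "integral D (\<Phi> k) = (\<Sum>r<M. \<Sum>s<M. integral D (\<lambda>x. cnj (w k x r) * w k x s) * K r s)" for k
  proof -
    have "integral D (\<Phi> k) = (\<Sum>r<M. integral D (\<lambda>x. \<Sum>s<M. cnj (w k x r) * w k x s * K r s))"
      unfolding \<Phi>_def
      by (rule integral_sum) (auto intro!: integrable_sum integrable_on_mult_left intg)
    also have "\<dots> = (\<Sum>r<M. \<Sum>s<M. integral D (\<lambda>x. cnj (w k x r) * w k x s * K r s))"
      by (rule sum.cong[OF refl], rule integral_sum) (auto intro!: integrable_on_mult_left intg)
    also have "\<dots> = (\<Sum>r<M. \<Sum>s<M. integral D (\<lambda>x. cnj (w k x r) * w k x s) * K r s)"
      by (simp add: integral_mult_left)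
    finally show ?thesis .
  qed
  have sumint: "integral D (\<Phi> 1) + integral D (\<Phi> 2) = (\<Sum>r<M. K r r)"
  proof -
    have "integral D (\<Phi> 1) + integral D (\<Phi> 2) =
      (\<Sum>r<M. \<Sum>s<M. (integral D (\<lambda>x. cnj (w 1 x r) * w 1 x s) + integral D (\<lambda>x. cnj (w 2 x r) * w 2 x s)) * K r s)"
      unfolding intPhi by (simp add: sum.distrib distrib_right)
    also have "\<dots> = (\<Sum>r<M. \<Sum>s<M. K r s * (if r = s then 1 else 0))"
    proof (intro sum.cong refl)
      fix r s assume rs: "r \<in> {..<M}" "s \<in> {..<M}"
      show "(integral D (\<lambda>x. cnj (w 1 x r) * w 1 x s) + integral D (\<lambda>x. cnj (w 2 x r) * w 2 x s)) * K r s =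
          K r s * (if r = s then 1 else 0)"
        using rs by (subst ortho[of r s]) (auto simp: mult.commute)
    qed
    also have "\<dots> = (\<Sum>r<M. K r r)"
      by (simp add: sum_delta_mult)
    finally show ?thesis .
  qed
  have Gc: "G \<in> carrier_mat n n" by (simp add: G_def gram_def)
  have trace: "(\<Sum>r<M. K r r) = (of_nat M - of_nat n) * dG"
  proof -
    have "(\<Sum>r<M. K r r) = of_nat M * dG - (\<Sum>r<M. \<Sum>i<n. \<Sum>i'<n. v r i * Ad i i' * cnj (v r i'))"
      by (simp add: K_def sum_subtractf)
    also have "(\<Sum>r<M. \<Sum>i<n. \<Sum>i'<n. v r i * Ad i i' * cnj (v r i')) =
       (\<Sum>i<n. \<Sum>i'<n. Ad i i' * (\<Sum>r<M. cnj (v r i') * v r i))"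
      by (rule trace_alg)
    also have "\<dots> = (\<Sum>i<n. (adj_mat G * G) $$ (i,i))"
    proof (rule sum.cong[OF refl])
      fix i assume i: "i \<in> {..<n}"
      have "(adj_mat G * G) $$ (i,i) = (\<Sum>i'<n. adj_mat G $$ (i,i') * G $$ (i',i))"
        using i adj_mat(1)[OF Gc] Gc by (auto simp: scalar_prod_def lessThan_atLeast0 intro!: sum.cong)
      also have "\<dots> = (\<Sum>i'<n. Ad i i' * (\<Sum>r<M. cnj (v r i') * v r i))"
        using i by (auto simp: Ad_def G_def gram_def v_def intro!: sum.cong)
      finally show "(\<Sum>i'<n. Ad i i' * (\<Sum>r<M. cnj (v r i') * v r i)) = (adj_mat G * G) $$ (i,i)" by simp
    qed
    also have "\<dots> = of_nat n * dG"
      using adj_mat(3)[OF Gc] by (simp add: dG_def)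
    finally show ?thesis by (simp add: algebra_simps)
  qed
  define h where "h = (\<lambda>x. max (Re (\<Phi> 1 x)) (Re (\<Phi> 2 x)))"
  have hc: "continuous_on D h"
    unfolding h_def
    by (intro continuous_intros continuous_on_subset[OF Phic]) auto
  obtain x0 where x0: "x0 \<in> D" "\<And>y. y \<in> D \<Longrightarrow> h y \<le> h x0"
    using continuous_attains_sup[OF cD _ hc] fund_dom_ne D_def by auto
  have ReI: "Re (integral D (\<Phi> k)) = integral D (\<lambda>x. Re (\<Phi> k x))" for k
    using integral_linear[OF Phii bounded_linear_Re] by (simp add: o_def)
  have le: "integral D (\<lambda>x. Re (\<Phi> k x)) \<le> h x0 * torus_area" if "k \<in> {1,2}" for k
  proof -
    have "integral D (\<lambda>x. Re (\<Phi> k x)) \<le> integral D (\<lambda>x. h x0)"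
    proof (rule integral_le)
      show "(\<lambda>x. Re (\<Phi> k x)) integrable_on D"
        by (rule int_compact[OF cD]) (intro continuous_intros continuous_on_subset[OF Phic], simp)
      show "(\<lambda>x. h x0) integrable_on D"
        by (rule integrable_on_const[OF lmeasurable_compact[OF cD]])
      fix x assume "x \<in> D"
      then have "h x \<le> h x0" by (rule x0(2))
      then show "Re (\<Phi> k x) \<le> h x0" using that unfolding h_def by auto
    qed
    also have "\<dots> = h x0 * torus_area" unfolding D_def by (rule integral_const_fund)
    finally show ?thesis .
  qed
  have "(real M - real n) * Re dG = Re (integral D (\<Phi> 1) + integral D (\<Phi> 2))"
    using sumint trace by simp
  also have "\<dots> = integral D (\<lambda>x. Re (\<Phi> 1 x)) + integral D (\<lambda>x. Re (\<Phi> 2 x))"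
    by (simp add: ReI[symmetric])
  also have "\<dots> \<le> 2 * torus_area * h x0"
    using le[of 1] le[of 2] by (simp add: algebra_simps)
  finally have main: "(real M - real n) * Re dG \<le> 2 * torus_area * h x0" .
  define k0 where "k0 = (if Re (\<Phi> 2 x0) \<le> Re (\<Phi> 1 x0) then 1 else (2::nat))"
  have hk: "h x0 = Re (\<Phi> k0 x0)" unfolding h_def k0_def by auto
  show ?thesis
    using main hk detform[of k0 x0]
    by (intro bexI[of _ k0] exI[of _ x0]) (auto simp: dG_def G_def k0_def)
qed


lemma gram_ind:
  fixes e :: "nat \<Rightarrow> complex \<Rightarrow> complex \<times> complex" and M n :: nat
  assumes cont: "\<And>i. i < M \<Longrightarrow> continuous_on UNIV (e i)"
    and orth: "\<And>i i'. i < M \<Longrightarrow> i' < M \<Longrightarrow> L2ip (e i) (e i') = (if i = i' then 1 else 0)"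
    and A: "torus_area > 0"
  shows "n \<le> M \<Longrightarrow> \<exists>j a. (\<forall>c<n. j c \<in> {1,2}) \<and>
     (\<Prod>i<n. real (M - i)) / (2 * torus_area) ^ n \<le> Re (Determinant.det (gram M e n j a))"
proof (induction n)
  case 0
  have "gram M e 0 (\<lambda>_. 1) (\<lambda>_. 0) = 1\<^sub>m 0" by (rule eq_matI) (auto simp: gram_def)
  then show ?case by (intro exI[of _ "\<lambda>_. 1"] exI[of _ "\<lambda>_. 0"]) simp
next
  case (Suc n)
  then have nM: "n < M" by simp
  from Suc obtain j a where ja: "\<forall>c<n. j c \<in> {1,2}"
    "(\<Prod>i<n. real (M - i)) / (2 * torus_area) ^ n \<le> Re (Determinant.det (gram M e n j a))" by auto
  define B where "B = (\<Prod>i<n. real (M - i)) / (2 * torus_area) ^ n"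
  have Bpos: "B > 0" unfolding B_def using nM A by (auto intro!: prod_pos divide_pos_pos)
  then have "Re (Determinant.det (gram M e n j a)) > 0" using ja(2) unfolding B_def by linarith
  then have nz: "Determinant.det (gram M e n j a) \<noteq> 0" by auto
  obtain k x where kx: "k \<in> {1,2}" "(real M - real n) * Re (Determinant.det (gram M e n j a))
           \<le> 2 * torus_area * Re (Determinant.det (gram M e (Suc n) (j(n:=k)) (a(n:=x))))"
    using gram_step[OF cont orth nz] by blast
  have Mn: "real (M - n) = real M - real n" using nM by simp
  have "(\<Prod>i<Suc n. real (M - i)) / (2 * torus_area) ^ Suc n = (real M - real n) * B / (2 * torus_area)"
    unfolding B_def using Mn by (simp add: field_simps)
  also have "\<dots> \<le> (real M - real n) * Re (Determinant.det (gram M e n j a)) / (2 * torus_area)"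
    using ja(2) nM A unfolding B_def by (intro divide_right_mono mult_left_mono) auto
  also have "\<dots> \<le> Re (Determinant.det (gram M e (Suc n) (j(n:=k)) (a(n:=x))))"
    using kx(2) A by (simp add: divide_le_eq mult.commute)
  finally have bnd: "(\<Prod>i<Suc n. real (M - i)) / (2 * torus_area) ^ Suc n \<le> Re (Determinant.det (gram M e (Suc n) (j(n:=k)) (a(n:=x))))" .
  have cj: "\<forall>c<Suc n. (j(n:=k)) c \<in> {1,2}" using ja(1) kx(1) by (auto simp: less_Suc_eq)
  show ?case by (rule exI, rule exI, rule conjI[OF cj bnd])
qed


lemma gram_Emat: "Determinant.det (gram N e N j a) = cnj (Determinant.det (Emat N e j a)) * Determinant.det (Emat N e j a)"
proof -
  define E where "E = Emat N e j a"
  have E: "E \<in> carrier_mat N N" by (simp add: E_def Emat_def)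
  have Ec: "map_mat cnj (transpose_mat E) \<in> carrier_mat N N" using E by simp
  have "gram N e N j a = map_mat cnj (transpose_mat E) * E"
    by (rule eq_matI) (use E in \<open>auto simp: gram_def E_def Emat_def scalar_prod_def lessThan_atLeast0 intro!: sum.cong\<close>)
  then have "Determinant.det (gram N e N j a) = Determinant.det (map_mat cnj (transpose_mat E)) * Determinant.det E"
    using det_mult[OF Ec E] by simp
  also have "Determinant.det (map_mat cnj (transpose_mat E)) = cnj (Determinant.det E)"
    using cnj_det det_transpose[OF E] by simp
  finally show ?thesis by (simp add: E_def)
qed

theorem mainTheorem9:
  fixes N :: nat and e :: "nat \<Rightarrow> complex \<Rightarrow> complex \<times> complex"
  assumes cont: "\<And>i. i < N \<Longrightarrow> continuous_on UNIV (e i)"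
    and per: "\<And>i. i < N \<Longrightarrow> gamma_periodic (e i)"
    and orth: "\<And>i i'. i < N \<Longrightarrow> i' < N \<Longrightarrow> L2ip (e i) (e i') = (if i = i' then 1 else 0)"
  shows "\<exists>j a. (\<forall>c<N. j c \<in> {1, 2}) \<and>
           cmod (Determinant.det (Emat N e j a)) \<ge>
             sqrt (fact N) / (2 powr (real N / 2) * torus_area powr (real N / 2))"
proof (cases "torus_area > 0")
  case False
  then have "torus_area = 0" using measure_nonneg[of lborel fund_dom] unfolding torus_area_def by linarith
  then show ?thesis by (intro exI[of _ "\<lambda>_. 1"] exI[of _ "\<lambda>_. 0"]) simp
next
  case A: True
  obtain j a where ja: "\<forall>c<N. j c \<in> {1,2}"
    "(\<Prod>i<N. real (N - i)) / (2 * torus_area) ^ N \<le> Re (Determinant.det (gram N e N j a))"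
    using gram_ind[OF cont orth A le_refl] by blast
  define X where "X = cmod (Determinant.det (Emat N e j a))"
  have X2: "Re (Determinant.det (gram N e N j a)) = X ^ 2"
    unfolding gram_Emat X_def by (simp add: cmod_power2 power2_eq_square[symmetric])
  have bnd: "fact N / (2 * torus_area) ^ N \<le> X ^ 2" using ja(2) X2 fact_prod by simp
  have P: "2 powr (real N / 2) * torus_area powr (real N / 2) = sqrt ((2 * torus_area) ^ N)"
  proof -
    have "2 powr (real N / 2) * torus_area powr (real N / 2) = (2 * torus_area) powr (real N / 2)"
      using A by (simp add: powr_mult)
    also have "\<dots> = ((2 * torus_area) powr real N) powr (1/2)" by (simp add: powr_powr)
    also have "\<dots> = sqrt ((2 * torus_area) ^ N)" using A by (simp add: powr_realpow powr_half_sqrt)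
    finally show ?thesis .
  qed
  have "sqrt (fact N) / (2 powr (real N / 2) * torus_area powr (real N / 2)) = sqrt (fact N / (2 * torus_area) ^ N)"
    unfolding P by (simp add: real_sqrt_divide)
  also have "\<dots> \<le> sqrt (X ^ 2)" using bnd by (rule real_sqrt_le_mono)
  also have "\<dots> = X" by (simp add: X_def)
  finally show ?thesis using ja(1) unfolding X_def by blast
qed

end
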